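(* Let $r,s\in\mathbb{N}$, $\alpha\in\mathbb{R}^r_{++}$, $p,p_u\in[1,\infty)$, $\rho_u>0$, and $\delta\in\mathbb{R}^r_{++}$. For every $x\in\mathbb{R}^s_+$ and every $u\in\mathbb{R}^{r\times s}_{++}$ with $\|u\|_{p_u}\le\rho_u$, $$\Big[\sum_{l=1}^r\delta_l^p\Big(\sum_{m=1}^s u_{lm}x_m\Big)^{p\alpha_l}\Big]^{1/p}\le\Psi^{\alpha}_{p,p_u}\big(\delta,\rho_u\|x\|_{p_u'}\big).$$ Moreover, if $(\delta,t)\le(\tilde\delta,\tilde t)$ componentwise (with $t,\tilde t>0$), then $\Psi^\alpha_{p,p_u}(\delta,t)\le\Psi^\alpha_{p,p_u}(\tilde\delta,\tilde t)\le\sum_{l=1}^r\tilde\delta_l\tilde t^{\alpha_l}$.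
   Context: $\mathbb{R}_{++}=(0,\infty)$; $\|u\|_{p_u}$ is the entrywise $\ell_{p_u}$ norm; $p_u'=p_u/(p_u-1)$ (with $p_u'=\infty$ if $p_u=1$). For $p,q\ge1$ and $\alpha\in\mathbb{R}^r_{++}$, define $\Psi^\alpha_{p,q}:\mathbb{R}^r_{++}\times\mathbb{R}_{++}\to\mathbb{R}_{++}$ by $$\Psi^{\alpha}_{p,q}(\delta,t)=\Big(\Big[\sum_{l\in J}(\delta_l t^{\alpha_l})^{\frac{pq}{q-\bar\alpha p}}\Big]^{1-\frac{\bar\alpha p}{q}}+\max_{j\in J^c}(\delta_j t^{\alpha_j})^p\Big)^{1/p},$$ where $J=\{l\in[r]:\alpha_l p<q\}$, $J^c=\{l\in[r]:\alpha_l p\ge q\}$, $\bar\alpha=\min_{l\in J}\alpha_l$, and an empty sum or empty maximum is taken to be $0$. *)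

theory Defs
  imports Complex_Main
begin

definition lp_norm :: "real \<Rightarrow> 'a set \<Rightarrow> ('a \<Rightarrow> real) \<Rightarrow> real" where
  "lp_norm p I f = (\<Sum>i\<in>I. \<bar>f i\<bar> powr p) powr (1 / p)"

definition sup_norm :: "'a set \<Rightarrow> ('a \<Rightarrow> real) \<Rightarrow> real" where
  "sup_norm I f = (if I = {} then 0 else Max ((\<lambda>i. \<bar>f i\<bar>) ` I))"

definition dual_norm :: "real \<Rightarrow> 'a set \<Rightarrow> ('a \<Rightarrow> real) \<Rightarrow> real" where
  "dual_norm p I f = (if p = 1 then sup_norm I f else lp_norm (p / (p - 1)) I f)"

text \<open>Psi^alpha_{p,q}(delta,t); vectors in R^r are functions on {..<r}.
  Empty sums/maxima are 0.\<close>
definition Psi :: "nat \<Rightarrow> (nat \<Rightarrow> real) \<Rightarrow> real \<Rightarrow> real \<Rightarrow> (nat \<Rightarrow> real) \<Rightarrow> real \<Rightarrow> real" where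
  "Psi r \<alpha> p q \<delta> t =
    (let J = {l \<in> {..<r}. \<alpha> l * p < q};
         Jc = {l \<in> {..<r}. \<alpha> l * p \<ge> q};
         ab = Min (\<alpha> ` J)
     in ((if J = {} then 0 else
           (\<Sum>l\<in>J. (\<delta> l * t powr \<alpha> l) powr (p * q / (q - ab * p))) powr (1 - ab * p / q))
         + (if Jc = {} then 0 else Max ((\<lambda>j. (\<delta> j * t powr \<alpha> j) powr p) ` Jc)))
        powr (1 / p))"

end

theory Submission
  imports Defs "HOL-Analysis.Analysis"
begin

lemma holder_sum:
  fixes f g :: "'a \<Rightarrow> real"
  assumes fin: "finite I" and f0: "\<forall>i\<in>I. f i \<ge> 0" and g0: "\<forall>i\<in>I. g i \<ge> 0"
    and pq: "p > 1" "q > 1" "1/p + 1/q = 1"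
  shows "(\<Sum>i\<in>I. f i * g i) \<le> (\<Sum>i\<in>I. f i powr p) powr (1/p) * (\<Sum>i\<in>I. g i powr q) powr (1/q)"
proof -
  define A where "A = (\<Sum>i\<in>I. f i powr p)"
  define B where "B = (\<Sum>i\<in>I. g i powr q)"
  have A0: "A \<ge> 0" "B \<ge> 0" unfolding A_def B_def by (auto intro: sum_nonneg)
  show ?thesis
  proof (cases "A = 0 \<or> B = 0")
    case True
    have "\<forall>i\<in>I. f i = 0 \<or> g i = 0"
    proof
      fix i assume i: "i \<in> I"
      from True show "f i = 0 \<or> g i = 0"
      proof
        assume "A = 0"
        then have "\<forall>j\<in>I. f j powr p = 0" using fin f0 unfolding A_def
          by (subst (asm) sum_nonneg_eq_0_iff) auto
        then show ?thesis using i by simp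
      next
        assume "B = 0"
        then have "\<forall>j\<in>I. g j powr q = 0" using fin g0 unfolding B_def
          by (subst (asm) sum_nonneg_eq_0_iff) auto
        then show ?thesis using i by simp
      qed
    qed
    then have "(\<Sum>i\<in>I. f i * g i) = 0" by (intro sum.neutral) auto
    then show ?thesis by simp
  next
    case False
    then have Ap: "A > 0" "B > 0" using A0 by auto
    define A' where "A' = A powr (1/p)"
    define B' where "B' = B powr (1/q)"
    have A'p: "A' > 0" "B' > 0" using Ap by (auto simp: A'_def B'_def)
    have pw: "A' powr p = A" "B' powr q = B" using Ap pq
      by (auto simp: A'_def B'_def powr_powr)
    have each: "f i * g i / (A' * B') \<le> f i powr p / (A * p) + g i powr q / (B * q)" if "i \<in> I" for i
    proof -
      have "(f i / A') * (g i / B') \<le> (f i / A') powr p / p + (g i / B') powr q / q"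
        using Youngs_inequality[of p q "f i / A'" "g i / B'"] pq f0 g0 that A'p by auto
      also have "\<dots> = f i powr p / (A * p) + g i powr q / (B * q)"
        using f0 g0 that A'p pw by (simp add: powr_divide)
      finally show ?thesis by simp
    qed
    have "(\<Sum>i\<in>I. f i * g i) / (A' * B') = (\<Sum>i\<in>I. f i * g i / (A' * B'))"
      by (simp add: sum_divide_distrib)
    also have "\<dots> \<le> (\<Sum>i\<in>I. f i powr p / (A * p) + g i powr q / (B * q))"
      by (rule sum_mono) (use each in auto)
    also have "\<dots> = A / (A * p) + B / (B * q)"
      by (simp add: sum.distrib A_def B_def sum_divide_distrib)
    also have "\<dots> = 1" using Ap pq by simp
    finally have "(\<Sum>i\<in>I. f i * g i) \<le> A' * B'" using A'p by (simp add: divide_le_eq)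
    then show ?thesis by (simp add: A'_def B'_def A_def B_def)
  qed
qed


lemma pnorm_le_sum:
  fixes a :: "'a \<Rightarrow> real"
  assumes fin: "finite I" and a0: "\<forall>i\<in>I. a i \<ge> 0" and k: "k \<ge> 1"
  shows "(\<Sum>i\<in>I. a i powr k) powr (1/k) \<le> (\<Sum>i\<in>I. a i)"
proof (cases "(\<Sum>i\<in>I. a i) = 0")
  case True
  then have "\<forall>i\<in>I. a i = 0" using fin a0 by (subst (asm) sum_nonneg_eq_0_iff) auto
  then show ?thesis by simp
next
  case False
  define S where "S = (\<Sum>i\<in>I. a i)"
  have Sp: "S > 0" using False a0 unfolding S_def by (metis less_eq_real_def sum_nonneg)
  have each: "a i powr k \<le> S powr k * (a i / S)" if "i \<in> I" for i
  proof -
    have ai: "a i \<le> S" unfolding S_def using fin a0 that by (intro member_le_sum) auto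
    have "(a i / S) powr k \<le> (a i / S) powr 1"
      using ai a0 that Sp k by (intro powr_mono') (auto simp: divide_le_eq)
    then have "a i powr k / S powr k \<le> a i / S" using a0 that Sp by (simp add: powr_divide)
    then show ?thesis using Sp by (simp add: divide_le_eq mult.commute)
  qed
  have "(\<Sum>i\<in>I. a i powr k) \<le> (\<Sum>i\<in>I. S powr k * (a i / S))"
    by (rule sum_mono) (use each in auto)
  also have "\<dots> = S powr k" using Sp by (simp add: sum_distrib_left[symmetric] sum_divide_distrib[symmetric] S_def)
  finally have "(\<Sum>i\<in>I. a i powr k) powr (1/k) \<le> (S powr k) powr (1/k)"
    using k a0 by (intro powr_mono2) (auto intro: sum_nonneg)
  also have "\<dots> = S" using Sp k by (simp add: powr_powr)
  finally show ?thesis by (simp add: S_def)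
qed

lemma superadd_powr:
  fixes x y p :: real
  assumes "x \<ge> 0" "y \<ge> 0" "p \<ge> 1"
  shows "x powr p + y powr p \<le> (x + y) powr p"
proof -
  have "((\<Sum>i\<in>{0::nat,1}. (if i = 0 then x else y) powr p)) powr (1/p) \<le> (\<Sum>i\<in>{0::nat,1}. (if i = 0 then x else y))"
    using assms by (intro pnorm_le_sum) auto
  then have "(x powr p + y powr p) powr (1/p) \<le> x + y" by simp
  then have "((x powr p + y powr p) powr (1/p)) powr p \<le> (x + y) powr p"
    using assms by (intro powr_mono2) auto
  then show ?thesis using assms by (simp add: powr_powr)
qed

lemma Max_img_mono:
  fixes f g :: "'a \<Rightarrow> real"
  assumes "finite S" "S \<noteq> {}" "\<forall>i\<in>S. f i \<le> g i"
  shows "Max (f ` S) \<le> Max (g ` S)"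
proof -
  have "Max (f ` S) \<in> f ` S" using assms by simp
  then obtain j where j: "j \<in> S" "Max (f ` S) = f j" by blast
  have "g j \<le> Max (g ` S)" using assms j by auto
  then show ?thesis using j assms by (metis order_trans)
qed


definition PsiIn :: "nat \<Rightarrow> (nat \<Rightarrow> real) \<Rightarrow> real \<Rightarrow> real \<Rightarrow> (nat \<Rightarrow> real) \<Rightarrow> real" where
  "PsiIn r \<alpha> p q a =
    (let J = {l \<in> {..<r}. \<alpha> l * p < q};
         Jc = {l \<in> {..<r}. \<alpha> l * p \<ge> q};
         ab = Min (\<alpha> ` J)
     in (if J = {} then 0 else
           (\<Sum>l\<in>J. a l powr (p * q / (q - ab * p))) powr (1 - ab * p / q))
         + (if Jc = {} then 0 else Max ((\<lambda>j. a j powr p) ` Jc)))"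

lemma Psi_eq: "Psi r \<alpha> p q \<delta> t = PsiIn r \<alpha> p q (\<lambda>l. \<delta> l * t powr \<alpha> l) powr (1/p)"
  by (simp add: Psi_def PsiIn_def Let_def)

lemma PsiIn_facts:
  fixes r :: nat and \<alpha> :: "nat \<Rightarrow> real" and p q :: real
  assumes apos: "\<forall>l<r. \<alpha> l > 0" and p1: "p \<ge> 1" and q1: "q \<ge> 1"
  defines "J \<equiv> {l \<in> {..<r}. \<alpha> l * p < q}" and "Jc \<equiv> {l \<in> {..<r}. \<alpha> l * p \<ge> q}"
    and "ab \<equiv> Min (\<alpha> ` {l \<in> {..<r}. \<alpha> l * p < q})"
  shows "PsiIn r \<alpha> p q c = (if J = {} then 0 else
           (\<Sum>l\<in>J. c l powr (p * q / (q - ab * p))) powr (1 - ab * p / q))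
         + (if Jc = {} then 0 else Max ((\<lambda>j. c j powr p) ` Jc))"
    and "finite J" "finite Jc" "J \<inter> Jc = {}" "J \<union> Jc = {..<r}"
    and "J \<noteq> {} \<Longrightarrow> ab > 0 \<and> ab * p < q \<and> (\<forall>l\<in>J. ab \<le> \<alpha> l)"
proof -
  show "PsiIn r \<alpha> p q c = (if J = {} then 0 else
           (\<Sum>l\<in>J. c l powr (p * q / (q - ab * p))) powr (1 - ab * p / q))
         + (if Jc = {} then 0 else Max ((\<lambda>j. c j powr p) ` Jc))"
    unfolding PsiIn_def Let_def J_def Jc_def ab_def by (rule refl)
  show "finite J" "finite Jc" "J \<inter> Jc = {}" "J \<union> Jc = {..<r}" by (auto simp: J_def Jc_def)
  assume ne: "J \<noteq> {}"
  have fJ: "finite J" by (simp add: J_def)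
  have "ab \<in> \<alpha> ` J" unfolding ab_def J_def[symmetric] using ne fJ by (intro Min_in) auto
  then obtain l0 where l0: "l0 \<in> J" "ab = \<alpha> l0" by blast
  have "ab > 0" using l0 apos by (auto simp: J_def)
  moreover have "ab * p < q" using l0 by (auto simp: J_def)
  moreover have "\<forall>l\<in>J. ab \<le> \<alpha> l" unfolding ab_def J_def[symmetric] using fJ by auto
  ultimately show "ab > 0 \<and> ab * p < q \<and> (\<forall>l\<in>J. ab \<le> \<alpha> l)" by blast
qed


lemma PsiIn_mono:
  fixes r :: nat and \<alpha> a b :: "nat \<Rightarrow> real" and p q :: real
  assumes apos: "\<forall>l<r. \<alpha> l > 0" and p1: "p \<ge> 1" and q1: "q \<ge> 1"
    and ab: "\<forall>l<r. 0 \<le> a l \<and> a l \<le> b l"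
  shows "PsiIn r \<alpha> p q a \<le> PsiIn r \<alpha> p q b"
proof -
  define J where "J = {l \<in> {..<r}. \<alpha> l * p < q}"
  define Jc where "Jc = {l \<in> {..<r}. \<alpha> l * p \<ge> q}"
  define m where "m = Min (\<alpha> ` J)"
  note F = PsiIn_facts[OF apos p1 q1, folded J_def Jc_def, folded m_def]
  have JI: "J \<subseteq> {..<r}" "Jc \<subseteq> {..<r}" by (auto simp: J_def Jc_def)
  have first: "(if J = {} then 0 else (\<Sum>l\<in>J. a l powr (p * q / (q - m * p))) powr (1 - m * p / q))
     \<le> (if J = {} then 0 else (\<Sum>l\<in>J. b l powr (p * q / (q - m * p))) powr (1 - m * p / q))"
  proof (cases "J = {}")
    case False
    then have mm: "m > 0" "m * p < q" using F(6) by auto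
    have k0: "p * q / (q - m * p) \<ge> 0" using mm p1 q1 by auto
    have e0: "1 - m * p / q \<ge> 0" using mm q1 by (simp add: divide_le_eq)
    have "(\<Sum>l\<in>J. a l powr (p * q / (q - m * p))) \<le> (\<Sum>l\<in>J. b l powr (p * q / (q - m * p)))"
      using ab JI k0 by (intro sum_mono powr_mono2) auto
    then show ?thesis using False e0
      by (simp add: powr_mono2 sum_nonneg)
  qed simp
  have second: "(if Jc = {} then 0 else Max ((\<lambda>j. a j powr p) ` Jc))
     \<le> (if Jc = {} then 0 else Max ((\<lambda>j. b j powr p) ` Jc))"
  proof (cases "Jc = {}")
    case False
    have "Max ((\<lambda>j. a j powr p) ` Jc) \<le> Max ((\<lambda>j. b j powr p) ` Jc)"
    proof (intro Max_img_mono ballI)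
      fix i assume "i \<in> Jc"
      then have "i < r" using JI by auto
      then show "a i powr p \<le> b i powr p" using ab p1 by (intro powr_mono2) auto
    qed (use F(3) False in auto)
    then show ?thesis using False by simp
  qed simp
  show ?thesis unfolding F(1) using first second by linarith
qed

lemma PsiIn_nonneg:
  fixes r :: nat and \<alpha> a :: "nat \<Rightarrow> real" and p q :: real
  assumes apos: "\<forall>l<r. \<alpha> l > 0" and p1: "p \<ge> 1" and q1: "q \<ge> 1"
  shows "PsiIn r \<alpha> p q a \<ge> 0"
proof -
  define J where "J = {l \<in> {..<r}. \<alpha> l * p < q}"
  define Jc where "Jc = {l \<in> {..<r}. \<alpha> l * p \<ge> q}"
  define m where "m = Min (\<alpha> ` J)"
  note F = PsiIn_facts[OF apos p1 q1, folded J_def Jc_def, folded m_def]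
  have "(if Jc = {} then 0 else Max ((\<lambda>j. a j powr p) ` Jc)) \<ge> 0"
  proof (cases "Jc = {}")
    case False
    then obtain j where "j \<in> Jc" by auto
    then have "a j powr p \<le> Max ((\<lambda>j. a j powr p) ` Jc)" using F(3) by auto
    then show ?thesis using False by (simp add: order_trans[OF powr_ge_zero])
  qed simp
  then show ?thesis unfolding F(1) by (simp add: sum_nonneg)
qed

lemma PsiIn_le:
  fixes r :: nat and \<alpha> a :: "nat \<Rightarrow> real" and p q :: real
  assumes apos: "\<forall>l<r. \<alpha> l > 0" and p1: "p \<ge> 1" and q1: "q \<ge> 1"
    and a0: "\<forall>l<r. 0 \<le> a l"
  shows "PsiIn r \<alpha> p q a \<le> (\<Sum>l<r. a l) powr p"
proof -
  define J where "J = {l \<in> {..<r}. \<alpha> l * p < q}"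
  define Jc where "Jc = {l \<in> {..<r}. \<alpha> l * p \<ge> q}"
  define m where "m = Min (\<alpha> ` J)"
  note F = PsiIn_facts[OF apos p1 q1, folded J_def Jc_def, folded m_def]
  have JI: "J \<subseteq> {..<r}" "Jc \<subseteq> {..<r}" by (auto simp: J_def Jc_def)
  have first: "(if J = {} then 0 else (\<Sum>l\<in>J. a l powr (p * q / (q - m * p))) powr (1 - m * p / q))
     \<le> (\<Sum>l\<in>J. a l) powr p"
  proof (cases "J = {}")
    case False
    then have mm: "m > 0" "m * p < q" using F(6) by auto
    define k where "k = p * q / (q - m * p)"
    have kp: "k \<ge> p" unfolding k_def using mm p1 q1 by (simp add: le_divide_eq)
    have e: "1 - m * p / q = p * (1 / k)" unfolding k_def using mm p1 q1
      by (simp add: field_simps)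
    have "(\<Sum>l\<in>J. a l powr k) powr (1 - m * p / q) = ((\<Sum>l\<in>J. a l powr k) powr (1 / k)) powr p"
      unfolding e by (simp add: powr_powr mult.commute)
    also have "\<dots> \<le> (\<Sum>l\<in>J. a l) powr p"
      using a0 JI kp p1 F(2) by (intro powr_mono2 pnorm_le_sum) auto
    finally show ?thesis using False by (simp add: k_def)
  qed (simp)
  have second: "(if Jc = {} then 0 else Max ((\<lambda>j. a j powr p) ` Jc)) \<le> (\<Sum>l\<in>Jc. a l) powr p"
  proof (cases "Jc = {}")
    case False
    have "Max ((\<lambda>j. a j powr p) ` Jc) \<in> (\<lambda>j. a j powr p) ` Jc" using False F(3) by simp
    then obtain j where j: "j \<in> Jc" "Max ((\<lambda>j. a j powr p) ` Jc) = a j powr p" by blast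
    have "a j \<le> (\<Sum>l\<in>Jc. a l)" using j F(3) a0 JI by (intro member_le_sum) auto
    then have "a j powr p \<le> (\<Sum>l\<in>Jc. a l) powr p" using a0 j JI p1 by (intro powr_mono2) auto
    then show ?thesis using j False by simp
  qed (simp add: sum_nonneg)
  have "(\<Sum>l\<in>J. a l) powr p + (\<Sum>l\<in>Jc. a l) powr p \<le> ((\<Sum>l\<in>J. a l) + (\<Sum>l\<in>Jc. a l)) powr p"
    using a0 JI p1 by (intro superadd_powr) (auto intro!: sum_nonneg)
  also have "(\<Sum>l\<in>J. a l) + (\<Sum>l\<in>Jc. a l) = (\<Sum>l<r. a l)"
    using F(2-5) by (simp flip: sum.union_disjoint)
  finally show ?thesis unfolding F(1) using first second by linarith
qed


lemma PsiIn_main: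
  fixes r :: nat and \<alpha> a w :: "nat \<Rightarrow> real" and p q :: real
  assumes apos: "\<forall>l<r. \<alpha> l > 0" and p1: "p \<ge> 1" and q1: "q \<ge> 1"
    and a0: "\<forall>l<r. 0 \<le> a l" and w0: "\<forall>l<r. 0 \<le> w l"
    and wsum: "(\<Sum>l<r. w l powr q) \<le> 1"
  shows "(\<Sum>l<r. a l powr p * w l powr (p * \<alpha> l)) \<le> PsiIn r \<alpha> p q a"
proof -
  define J where "J = {l \<in> {..<r}. \<alpha> l * p < q}"
  define Jc where "Jc = {l \<in> {..<r}. \<alpha> l * p \<ge> q}"
  define m where "m = Min (\<alpha> ` J)"
  note F = PsiIn_facts[OF apos p1 q1, folded J_def Jc_def, folded m_def]
  have JI: "J \<subseteq> {..<r}" "Jc \<subseteq> {..<r}" by (auto simp: J_def Jc_def)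
  have sJ: "(\<Sum>l\<in>J. w l powr q) \<le> 1"
    using wsum JI w0 by (meson order_trans finite_lessThan powr_ge_zero sum_mono2)
  have sJc: "(\<Sum>l\<in>Jc. w l powr q) \<le> 1"
    using wsum JI w0 by (meson order_trans finite_lessThan powr_ge_zero sum_mono2)
  have w1: "w l \<le> 1" if "l < r" for l
  proof (rule ccontr)
    assume "\<not> w l \<le> 1"
    then have "w l powr q > 1" using q1 by (intro gr_one_powr) auto
    moreover have "w l powr q \<le> (\<Sum>l<r. w l powr q)"
      using that by (intro member_le_sum) auto
    ultimately show False using wsum by linarith
  qed
  have first: "(\<Sum>l\<in>J. a l powr p * w l powr (p * \<alpha> l))
     \<le> (if J = {} then 0 else (\<Sum>l\<in>J. a l powr (p * q / (q - m * p))) powr (1 - m * p / q))"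
  proof (cases "J = {}")
    case False
    then have mm: "m > 0" "m * p < q" "\<forall>l\<in>J. m \<le> \<alpha> l" using F(6) by auto
    define s' where "s' = q / (q - m * p)"
    define s where "s = q / (m * p)"
    have s1: "s > 1" "s' > 1" "1/s' + 1/s = 1" using mm p1 q1
      by (auto simp: s_def s'_def field_simps)
    have "(\<Sum>l\<in>J. a l powr p * w l powr (p * \<alpha> l)) \<le> (\<Sum>l\<in>J. a l powr p * w l powr (p * m))"
    proof (rule sum_mono)
      fix l assume l: "l \<in> J"
      then have "l < r" using JI by auto
      then have "w l powr (p * \<alpha> l) \<le> w l powr (p * m)"
        using w0 w1 mm l p1 by (intro powr_mono') auto
      then show "a l powr p * w l powr (p * \<alpha> l) \<le> a l powr p * w l powr (p * m)"
        by (intro mult_left_mono) auto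
    qed
    also have "\<dots> \<le> (\<Sum>l\<in>J. (a l powr p) powr s') powr (1/s') * (\<Sum>l\<in>J. (w l powr (p * m)) powr s) powr (1/s)"
      using F(2) s1 by (intro holder_sum) auto
    also have "(\<Sum>l\<in>J. (w l powr (p * m)) powr s) = (\<Sum>l\<in>J. w l powr q)"
      using mm p1 by (simp add: powr_powr s_def)
    also have "(\<Sum>l\<in>J. (a l powr p) powr s') = (\<Sum>l\<in>J. a l powr (p * q / (q - m * p)))"
      by (simp add: powr_powr s'_def)
    also have "1 / s' = 1 - m * p / q" using mm q1 by (simp add: s'_def field_simps)
    also have "(\<Sum>l\<in>J. a l powr (p * q / (q - m * p))) powr (1 - m * p / q) * (\<Sum>l\<in>J. w l powr q) powr (1 / s)
        \<le> (\<Sum>l\<in>J. a l powr (p * q / (q - m * p))) powr (1 - m * p / q) * 1"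
    proof (intro mult_left_mono)
      have "(\<Sum>l\<in>J. w l powr q) powr (1 / s) \<le> 1 powr (1/s)"
        using sJ s1 by (intro powr_mono2) (auto intro: sum_nonneg)
      then show "(\<Sum>l\<in>J. w l powr q) powr (1 / s) \<le> 1" by simp
    qed simp
    finally show ?thesis using False by simp
  qed simp
  have second: "(\<Sum>l\<in>Jc. a l powr p * w l powr (p * \<alpha> l))
     \<le> (if Jc = {} then 0 else Max ((\<lambda>j. a j powr p) ` Jc))"
  proof (cases "Jc = {}")
    case False
    define M where "M = Max ((\<lambda>j. a j powr p) ` Jc)"
    have M0: "M \<ge> 0"
    proof -
      obtain j where "j \<in> Jc" using False by auto
      then have "a j powr p \<le> M" using F(3) by (auto simp: M_def)
      then show ?thesis by (simp add: order_trans[OF powr_ge_zero])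
    qed
    have "(\<Sum>l\<in>Jc. a l powr p * w l powr (p * \<alpha> l)) \<le> (\<Sum>l\<in>Jc. M * w l powr q)"
    proof (rule sum_mono)
      fix l assume l: "l \<in> Jc"
      then have lr: "l < r" "q \<le> p * \<alpha> l" using JI by (auto simp: Jc_def mult.commute)
      have "w l powr (p * \<alpha> l) \<le> w l powr q"
        using w0 w1 lr by (intro powr_mono') auto
      moreover have "a l powr p \<le> M" using l F(3) by (auto simp: M_def)
      ultimately show "a l powr p * w l powr (p * \<alpha> l) \<le> M * w l powr q"
        using M0 by (intro mult_mono) auto
    qed
    also have "\<dots> = M * (\<Sum>l\<in>Jc. w l powr q)" by (simp add: sum_distrib_left)
    also have "\<dots> \<le> M * 1" using sJc M0 by (intro mult_left_mono) auto
    finally show ?thesis using False by (simp add: M_def)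
  qed simp
  have "(\<Sum>l<r. a l powr p * w l powr (p * \<alpha> l)) =
     (\<Sum>l\<in>J. a l powr p * w l powr (p * \<alpha> l)) + (\<Sum>l\<in>Jc. a l powr p * w l powr (p * \<alpha> l))"
    using F(2-5) by (simp flip: sum.union_disjoint)
  then show ?thesis unfolding F(1) using first second by linarith
qed


lemma part2:
  fixes r :: nat and \<alpha> \<delta> \<delta>' :: "nat \<Rightarrow> real" and p q t t' :: real
  assumes apos: "\<forall>l<r. \<alpha> l > 0" and p1: "p \<ge> 1" and q1: "q \<ge> 1"
    and d0: "\<forall>l<r. \<delta> l > 0" and t: "0 < t" "t \<le> t'" and dd: "\<forall>l<r. \<delta> l \<le> \<delta>' l"
  shows "Psi r \<alpha> p q \<delta> t \<le> Psi r \<alpha> p q \<delta>' t' \<and> Psi r \<alpha> p q \<delta>' t' \<le> (\<Sum>l<r. \<delta>' l * t' powr \<alpha> l)"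
proof
  have ab: "\<forall>l<r. 0 \<le> \<delta> l * t powr \<alpha> l \<and> \<delta> l * t powr \<alpha> l \<le> \<delta>' l * t' powr \<alpha> l"
  proof (intro allI impI conjI)
    fix l assume l: "l < r"
    show "0 \<le> \<delta> l * t powr \<alpha> l" using d0 l by (simp add: less_imp_le)
    have "t powr \<alpha> l \<le> t' powr \<alpha> l" using t apos l by (intro powr_mono2) auto
    moreover have "0 \<le> \<delta>' l" using d0 dd l by (meson less_imp_le order_trans)
    ultimately show "\<delta> l * t powr \<alpha> l \<le> \<delta>' l * t' powr \<alpha> l"
      using d0 dd l by (intro mult_mono) auto
  qed
  show "Psi r \<alpha> p q \<delta> t \<le> Psi r \<alpha> p q \<delta>' t'"
    unfolding Psi_eq using p1 PsiIn_mono[OF apos p1 q1 ab] PsiIn_nonneg[OF apos p1 q1]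
    by (intro powr_mono2) auto
  have b0: "\<forall>l<r. 0 \<le> \<delta>' l * t' powr \<alpha> l" using ab by (meson order_trans)
  have "Psi r \<alpha> p q \<delta>' t' \<le> ((\<Sum>l<r. \<delta>' l * t' powr \<alpha> l) powr p) powr (1/p)"
    unfolding Psi_eq using p1 PsiIn_le[OF apos p1 q1 b0] PsiIn_nonneg[OF apos p1 q1]
    by (intro powr_mono2) auto
  also have "\<dots> = (\<Sum>l<r. \<delta>' l * t' powr \<alpha> l)"
  proof -
    have "0 \<le> (\<Sum>l<r. \<delta>' l * t' powr \<alpha> l)" using b0 by (intro sum_nonneg) auto
    then show ?thesis using p1 by (simp add: powr_powr)
  qed
  finally show "Psi r \<alpha> p q \<delta>' t' \<le> (\<Sum>l<r. \<delta>' l * t' powr \<alpha> l)" .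
qed


lemma dual_norm_nonneg:
  assumes "finite I" shows "dual_norm q I x \<ge> 0"
proof -
  have "sup_norm I x \<ge> 0"
  proof (cases "I = {}")
    case False
    then obtain i where i: "i \<in> I" by auto
    then have "\<bar>x i\<bar> \<le> Max ((\<lambda>i. \<bar>x i\<bar>) ` I)" using assms by auto
    then show ?thesis using False by (simp add: sup_norm_def order_trans[OF abs_ge_zero])
  qed (simp add: sup_norm_def)
  then show ?thesis by (simp add: dual_norm_def lp_norm_def)
qed

lemma part1:
  fixes r s :: nat and \<alpha> \<delta> x :: "nat \<Rightarrow> real" and u :: "nat \<Rightarrow> nat \<Rightarrow> real" and p q \<rho> :: real
  assumes apos: "\<forall>l<r. \<alpha> l > 0" and p1: "p \<ge> 1" and q1: "q \<ge> 1" and rho: "\<rho> > 0"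
    and d0: "\<forall>l<r. \<delta> l > 0"
    and x0: "\<forall>m<s. x m \<ge> 0" and u0: "\<forall>l<r. \<forall>m<s. u l m > 0"
    and un: "lp_norm q ({..<r} \<times> {..<s}) (\<lambda>(l, m). u l m) \<le> \<rho>"
  shows "(\<Sum>l<r. \<delta> l powr p * (\<Sum>m<s. u l m * x m) powr (p * \<alpha> l)) powr (1 / p)
                \<le> Psi r \<alpha> p q \<delta> (\<rho> * dual_norm q {..<s} x)"
proof -
  define D where "D = dual_norm q {..<s} x"
  define v where "v l = (\<Sum>m<s. u l m powr q) powr (1/q)" for l
  define w where "w l = v l / \<rho>" for l
  define t where "t = \<rho> * D"
  define a where "a l = \<delta> l * t powr \<alpha> l" for l
  define y where "y l = (\<Sum>m<s. u l m * x m)" for l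
  have D0: "D \<ge> 0" unfolding D_def by (rule dual_norm_nonneg) simp
  have t0: "t \<ge> 0" using D0 rho by (simp add: t_def)
  have v0: "v l \<ge> 0" for l by (simp add: v_def)
  have w0: "w l \<ge> 0" for l using v0 rho by (simp add: w_def)
  have y0: "y l \<ge> 0" if "l < r" for l
    unfolding y_def using x0 u0 that by (intro sum_nonneg) (simp add: less_imp_le)
  have hold: "y l \<le> v l * D" if l: "l < r" for l
  proof (cases "q = 1")
    case True
    then have Dq: "D = sup_norm {..<s} x" by (simp add: D_def dual_norm_def)
    have vq: "v l = (\<Sum>m<s. u l m)"
    proof -
      have "(\<Sum>m<s. u l m powr q) = (\<Sum>m<s. u l m)" using True u0 l
        by (intro sum.cong) (auto simp: less_imp_le)
      moreover have "(\<Sum>m<s. u l m) \<ge> 0" using u0 l by (intro sum_nonneg) (auto simp: less_imp_le)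
      ultimately show ?thesis by (simp add: v_def True)
    qed
    have "x m \<le> D" if m: "m < s" for m
    proof -
      have "\<bar>x m\<bar> \<le> Max ((\<lambda>i. \<bar>x i\<bar>) ` {..<s})" using m by auto
      moreover have "x m \<le> \<bar>x m\<bar>" by simp
      moreover have "{..<s} \<noteq> {}" using m by auto
      ultimately show ?thesis by (simp add: Dq sup_norm_def)
    qed
    then have "y l \<le> (\<Sum>m<s. u l m * D)" unfolding y_def using u0 l
      by (intro sum_mono mult_left_mono) (auto simp: less_imp_le)
    also have "\<dots> = v l * D" by (simp add: vq sum_distrib_right)
    finally show ?thesis .
  next
    case False
    then have q1': "q > 1" using q1 by simp
    define q' where "q' = q / (q - 1)"
    have q'1: "q' > 1" "1/q + 1/q' = 1" using q1' by (auto simp: q'_def field_simps)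
    have Dq: "D = (\<Sum>m<s. x m powr q') powr (1/q')"
      using False x0 by (simp add: D_def dual_norm_def lp_norm_def q'_def)
    show ?thesis unfolding y_def Dq v_def
      using u0 x0 l q1' q'1 by (intro holder_sum) (auto simp: less_imp_le)
  qed
  have wsum: "(\<Sum>l<r. w l powr q) \<le> 1"
  proof -
    define L where "L = (\<Sum>lm\<in>{..<r} \<times> {..<s}. \<bar>(\<lambda>(l, m). u l m) lm\<bar> powr q)"
    have L0: "L \<ge> 0" unfolding L_def by (intro sum_nonneg) auto
    have "L powr (1/q) \<le> \<rho>" using un by (simp add: lp_norm_def L_def)
    then have "(L powr (1/q)) powr q \<le> \<rho> powr q" using q1 L0 by (intro powr_mono2) auto
    then have Lr: "L \<le> \<rho> powr q" using q1 L0 by (simp add: powr_powr)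
    have L2: "L = (\<Sum>l<r. \<Sum>m<s. u l m powr q)"
      unfolding L_def sum.cartesian_product
      using u0 by (intro sum.cong) (auto simp: less_imp_le)
    have "w l powr q = (\<Sum>m<s. u l m powr q) / \<rho> powr q" for l
    proof -
      have "w l powr q = v l powr q / \<rho> powr q" using v0 rho by (simp add: w_def powr_divide)
      also have "v l powr q = (\<Sum>m<s. u l m powr q)" using q1
        by (simp add: v_def powr_powr sum_nonneg)
      finally show ?thesis .
    qed
    then have "(\<Sum>l<r. w l powr q) = L / \<rho> powr q" by (simp add: L2 sum_divide_distrib)
    also have "\<dots> \<le> 1" using Lr rho by simp
    finally show ?thesis .
  qed
  have termb: "\<delta> l powr p * y l powr (p * \<alpha> l) \<le> a l powr p * w l powr (p * \<alpha> l)" if l: "l < r" for l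
  proof -
    have "y l powr (p * \<alpha> l) \<le> (v l * D) powr (p * \<alpha> l)"
      using y0 hold l p1 apos by (intro powr_mono2) (auto simp: less_imp_le)
    then have "\<delta> l powr p * y l powr (p * \<alpha> l) \<le> \<delta> l powr p * (v l * D) powr (p * \<alpha> l)"
      by (intro mult_left_mono) auto
    also have "\<dots> = a l powr p * w l powr (p * \<alpha> l)"
    proof -
      have "a l powr p = \<delta> l powr p * t powr (p * \<alpha> l)"
        using d0 l t0 by (simp add: a_def powr_mult powr_powr less_imp_le mult.commute)
      moreover have "t powr (p * \<alpha> l) * w l powr (p * \<alpha> l) = (v l * D) powr (p * \<alpha> l)"
      proof -
        have "t * w l = v l * D" using rho by (simp add: t_def w_def)
        then show ?thesis using t0 w0 by (simp add: powr_mult[symmetric])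
      qed
      ultimately show ?thesis by (simp add: mult.assoc)
    qed
    finally show ?thesis .
  qed
  have a0: "\<forall>l<r. 0 \<le> a l" using d0 by (simp add: a_def less_imp_le)
  have "(\<Sum>l<r. \<delta> l powr p * y l powr (p * \<alpha> l)) \<le> (\<Sum>l<r. a l powr p * w l powr (p * \<alpha> l))"
    using termb by (intro sum_mono) auto
  also have "\<dots> \<le> PsiIn r \<alpha> p q a"
    using PsiIn_main[OF apos p1 q1 a0 _ wsum] w0 by auto
  finally have "(\<Sum>l<r. \<delta> l powr p * y l powr (p * \<alpha> l)) powr (1/p) \<le> PsiIn r \<alpha> p q a powr (1/p)"
    using p1 by (intro powr_mono2) (auto intro: sum_nonneg)
  moreover have "a = (\<lambda>l. \<delta> l * t powr \<alpha> l)" by (simp add: a_def fun_eq_iff)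
  ultimately show ?thesis by (simp add: Psi_eq y_def t_def D_def)
qed

theorem mainTheorem9:
  fixes r s :: nat and \<alpha> \<delta> :: "nat \<Rightarrow> real" and p pu \<rho>u :: real
  assumes "\<forall>l<r. \<alpha> l > 0" and "p \<ge> 1" and "pu \<ge> 1" and "\<rho>u > 0"
    and "\<forall>l<r. \<delta> l > 0"
  shows "(\<forall>(x :: nat \<Rightarrow> real) (u :: nat \<Rightarrow> nat \<Rightarrow> real).
            (\<forall>m<s. x m \<ge> 0) \<and> (\<forall>l<r. \<forall>m<s. u l m > 0)
            \<and> lp_norm pu ({..<r} \<times> {..<s}) (\<lambda>(l, m). u l m) \<le> \<rho>u
            \<longrightarrow> (\<Sum>l<r. \<delta> l powr p * (\<Sum>m<s. u l m * x m) powr (p * \<alpha> l)) powr (1 / p)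
                \<le> Psi r \<alpha> p pu \<delta> (\<rho>u * dual_norm pu {..<s} x))
       \<and> (\<forall>(t :: real) (\<delta>' :: nat \<Rightarrow> real) (t' :: real).
            0 < t \<and> t \<le> t' \<and> (\<forall>l<r. \<delta> l \<le> \<delta>' l)
            \<longrightarrow> Psi r \<alpha> p pu \<delta> t \<le> Psi r \<alpha> p pu \<delta>' t'
                \<and> Psi r \<alpha> p pu \<delta>' t' \<le> (\<Sum>l<r. \<delta>' l * t' powr \<alpha> l))"
proof (intro conjI allI impI)
  fix x :: "nat \<Rightarrow> real" and u :: "nat \<Rightarrow> nat \<Rightarrow> real"
  assume h: "(\<forall>m<s. x m \<ge> 0) \<and> (\<forall>l<r. \<forall>m<s. u l m > 0)
            \<and> lp_norm pu ({..<r} \<times> {..<s}) (\<lambda>(l, m). u l m) \<le> \<rho>u"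
  show "(\<Sum>l<r. \<delta> l powr p * (\<Sum>m<s. u l m * x m) powr (p * \<alpha> l)) powr (1 / p)
                \<le> Psi r \<alpha> p pu \<delta> (\<rho>u * dual_norm pu {..<s} x)"
    using part1[OF assms(1-5)] h by blast
next
  fix t t' :: real and \<delta>' :: "nat \<Rightarrow> real"
  assume h: "0 < t \<and> t \<le> t' \<and> (\<forall>l<r. \<delta> l \<le> \<delta>' l)"
  then show "Psi r \<alpha> p pu \<delta> t \<le> Psi r \<alpha> p pu \<delta>' t'"
    using part2[OF assms(1-3) assms(5)] by blast
  from h show "Psi r \<alpha> p pu \<delta>' t' \<le> (\<Sum>l<r. \<delta>' l * t' powr \<alpha> l)"
    using part2[OF assms(1-3) assms(5)] by blast
qed

end
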